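(* Consider the group $G^2_3=\langle a,b,c\mid a^2=b^2=c^2=1,\ bca=acb,\ cab=bac,\ cba=abc\rangle$, which as a monoid (semigroup with identity) has the same presentation. Let $<$ be the deg-lex order on $\{a,b,c\}^*$ with $a<b<c$. Then the set $R'\subseteq\mathbb{F}\langle a,b,c\rangle$ consisting of (i) $x^2-1$ for $x\in\{a,b,c\}$; (ii) $bca-acb$; (iii) $cab-bac$; (iv) $cba-abc$; (v) $b(ac)^mb-(ca)^m$ for all integers $m\ge1$, generates the same ideal as the defining relations of $G^2_3$ (so $\mathbb{F}G^2_3=\mathbb{F}\langle a,b,c\mid R'\rangle$), and $R'$ is a Gröbner–Shirshov basis with respect to $<$.
   Context: $G^2_3$ is the Manturov $(2,3)$-group with $a=a_{12}$, $b=a_{13}$, $c=a_{23}$. The deg-lex order compares words first by length, then lexicographically using $a<b<c$. $\overline g$ denotes the $<$-largest monomial of $g\neq 0$; $g$ is monic if that monomial has coefficient $1$. Gröbner–Shirshov basis: for monic $f,g$, if $w=\overline f b=a'\overline g$ with $a',b\in X^*$ and $|\overline f|+|\overline g|>|w|$, then $(f,g)_w=fb-a'g$ (intersection composition); if $w=\overline f=a'\overline g b$, then $(f,g)_w=f-a'gb$ (inclusion composition). For monic $S$, $p$ is trivial modulo $(S,w)$ if $p=\sum\alpha_i u_is_iv_i$ with $\alpha_i\in\mathbb{F}$, $u_i,v_i$ words, $s_i\in S$, $u_i\overline{s_i}v_i<w$. A monic set $S$ is a Gröbner–Shirshov basis if every composition of elements of $S$ is trivial modulo $(S,w)$. *)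

theory Defs
  imports Main
begin

datatype gen = A | B | C   (* a = a12, b = a13, c = a23 *)

type_synonym word = "gen list"

type_synonym 'k ncpoly = "word \<Rightarrow> 'k"

definition is_poly :: "'k::zero ncpoly \<Rightarrow> bool" where
  "is_poly p \<longleftrightarrow> finite {w. p w \<noteq> 0}"

definition monom :: "word \<Rightarrow> 'k::{zero,one} ncpoly" where
  "monom u = (\<lambda>w. if w = u then 1 else 0)"

definition binom :: "word \<Rightarrow> word \<Rightarrow> 'k::ring_1 ncpoly" where
  "binom u v = (\<lambda>w. monom u w - monom v w)"

definition wmul :: "word \<Rightarrow> 'k::zero ncpoly \<Rightarrow> word \<Rightarrow> 'k ncpoly" where
  "wmul u p v = (\<lambda>w. if (\<exists>x. w = u @ x @ v)
                        then p (THE x. w = u @ x @ v) else 0)"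

definition lincomb :: "('k::comm_ring_1 \<times> word \<times> 'k ncpoly \<times> word) list \<Rightarrow> 'k ncpoly" where
  "lincomb l = (\<lambda>w. \<Sum>(\<alpha>, u, s, v) \<leftarrow> l. \<alpha> * wmul u s v w)"

definition ideal_gen :: "'k::comm_ring_1 ncpoly set \<Rightarrow> 'k ncpoly set" where
  "ideal_gen S = {lincomb l | l. \<forall>(\<alpha>, u, s, v) \<in> set l. s \<in> S}"

fun rank :: "gen \<Rightarrow> nat" where
  "rank A = 0" | "rank B = 1" | "rank C = 2"

definition deglex_less :: "word \<Rightarrow> word \<Rightarrow> bool" where
  "deglex_less u v \<longleftrightarrow> (u, v) \<in> lenlex {(x, y). rank x < rank y}"

definition lead :: "'k::zero ncpoly \<Rightarrow> word" where
  "lead p = (THE w. p w \<noteq> 0 \<and> (\<forall>w'. p w' \<noteq> 0 \<longrightarrow> w' = w \<or> deglex_less w' w))"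

definition monic :: "'k::{zero,one} ncpoly \<Rightarrow> bool" where
  "monic p \<longleftrightarrow> is_poly p \<and> (\<exists>w. p w \<noteq> 0) \<and> p (lead p) = 1"

definition trivial_mod :: "'k::comm_ring_1 ncpoly set \<Rightarrow> word \<Rightarrow> 'k ncpoly \<Rightarrow> bool" where
  "trivial_mod S w p \<longleftrightarrow>
     (\<exists>l. p = lincomb l \<and>
          (\<forall>(\<alpha>, u, s, v) \<in> set l. s \<in> S \<and> deglex_less (u @ lead s @ v) w))"

definition GS_basis :: "'k::comm_ring_1 ncpoly set \<Rightarrow> bool" where
  "GS_basis S \<longleftrightarrow>
     (\<forall>f \<in> S. monic f) \<and>
     (\<forall>f \<in> S. \<forall>g \<in> S. \<forall>a' b' w.
        (w = lead f @ b' \<and> w = a' @ lead g \<and>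
         length (lead f) + length (lead g) > length w)
        \<longrightarrow> trivial_mod S w (\<lambda>x. wmul [] f b' x - wmul a' g [] x)) \<and>
     (\<forall>f \<in> S. \<forall>g \<in> S. \<forall>a' b' w.
        (w = lead f \<and> w = a' @ lead g @ b')
        \<longrightarrow> trivial_mod S w (\<lambda>x. f x - wmul a' g b' x))"

definition R_G23 :: "'k::comm_ring_1 ncpoly set" where
  "R_G23 = {binom [A,A] [], binom [B,B] [], binom [C,C] [],
            binom [B,C,A] [A,C,B], binom [C,A,B] [B,A,C], binom [C,B,A] [A,B,C]}"

definition R'_G23 :: "'k::comm_ring_1 ncpoly set" where
  "R'_G23 = R_G23 \<union>
     {binom ([B] @ concat (replicate m [A,C]) @ [B]) (concat (replicate m [C,A])) | m::nat. m \<ge> 1}"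

end

theory Submission
  imports Defs
begin

lemma wmul_app[simp]: "wmul u p v (u @ x @ v) = p x"
  unfolding wmul_def by auto

lemma wmul_other: "\<forall>x. w \<noteq> u @ x @ v \<Longrightarrow> wmul u p v w = 0"
  unfolding wmul_def by auto

lemma wmul_binom: "wmul u (binom l r :: 'k::ring_1 ncpoly) v = binom (u @ l @ v) (u @ r @ v)"
proof
  fix w
  show "wmul u (binom l r :: 'k ncpoly) v w = binom (u @ l @ v) (u @ r @ v) w"
  proof (cases "\<exists>x. w = u @ x @ v")
    case True
    then obtain x where "w = u @ x @ v" by blast
    then show ?thesis by (simp add: binom_def monom_def)
  next
    case False
    then show ?thesis by (auto simp add: wmul_other binom_def monom_def)
  qed
qed

lemma wmul_Nil: "wmul [] p [] = p"
  by (rule ext) (metis append.left_neutral append_Nil2 wmul_app)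

lemma deglex_irrefl: "\<not> deglex_less x x"
  unfolding deglex_less_def by (rule lenlex_irreflexive) auto

lemma trans_rank: "trans {(x, y). rank x < rank y}"
  by (auto simp: trans_def)

lemma irrefl_rank: "irrefl {(x, y). rank x < rank y}"
  by (auto simp: irrefl_def)

lemma deglex_trans: "deglex_less x y \<Longrightarrow> deglex_less y z \<Longrightarrow> deglex_less x z"
  unfolding deglex_less_def using lenlex_trans trans_rank by blast

lemma deglex_mono: "deglex_less x y \<Longrightarrow> deglex_less (u @ x @ v) (u @ y @ v)"
  unfolding deglex_less_def
  by (simp add: lenlex_append1 irrefl_rank del: append_assoc add: append_assoc[symmetric])

lemma deglex_len: "length x < length y \<Longrightarrow> deglex_less x y"
  unfolding deglex_less_def lenlex_conv by auto

lemma binom_self: "binom x x = (\<lambda>_. 0)"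
  by (rule ext) (simp add: binom_def)

lemma binom_nz: "(binom l r :: 'k::field ncpoly) w \<noteq> 0 \<longleftrightarrow> l \<noteq> r \<and> (w = l \<or> w = r)"
  by (auto simp: binom_def monom_def)

lemma lead_binom:
  assumes "deglex_less r l"
  shows "lead (binom l r :: 'k::field ncpoly) = l"
proof -
  have ne: "l \<noteq> r" using assms deglex_irrefl by blast
  show ?thesis unfolding lead_def
  proof (rule the_equality)
    show "(binom l r :: 'k ncpoly) l \<noteq> 0 \<and> (\<forall>w'. (binom l r :: 'k ncpoly) w' \<noteq> 0 \<longrightarrow> w' = l \<or> deglex_less w' l)"
      using ne assms by (auto simp: binom_nz)
  next
    fix w assume "(binom l r :: 'k ncpoly) w \<noteq> 0 \<and> (\<forall>w'. (binom l r :: 'k ncpoly) w' \<noteq> 0 \<longrightarrow> w' = w \<or> deglex_less w' w)"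
    then show "w = l" using ne assms deglex_trans deglex_irrefl by (metis binom_nz)
  qed
qed

lemma monic_binom:
  assumes "deglex_less r l"
  shows "monic (binom l r :: 'k::field ncpoly)"
proof -
  have ne: "l \<noteq> r" using assms deglex_irrefl by blast
  have "{w. (binom l r :: 'k ncpoly) w \<noteq> 0} \<subseteq> {l, r}" by (auto simp: binom_nz)
  then have "is_poly (binom l r :: 'k ncpoly)" unfolding is_poly_def using finite_subset by blast
  then show ?thesis unfolding monic_def lead_binom[OF assms] using ne
    by (auto simp: binom_def monom_def)
qed

lemma lincomb_Nil: "lincomb [] = (\<lambda>_. 0)"
  by (rule ext) (simp add: lincomb_def)

lemma lincomb_append: "lincomb (l1 @ l2) = (\<lambda>w. lincomb l1 w + lincomb l2 w)"
  by (rule ext) (simp add: lincomb_def)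

lemma lincomb_single: "lincomb [(1, u, s, v)] = wmul u s v"
  by (rule ext) (simp add: lincomb_def)

lemma lincomb_scale: "lincomb (map (\<lambda>(\<alpha>, u, s, v). (c * \<alpha>, u, s, v)) l) = (\<lambda>w. c * lincomb l w)"
proof (rule ext)
  fix w
  show "lincomb (map (\<lambda>(\<alpha>, u, s, v). (c * \<alpha>, u, s, v)) l) w = c * lincomb l w"
    unfolding lincomb_def
    by (induction l) (auto simp: algebra_simps)
qed

lemma triv_zero: "trivial_mod S w (\<lambda>_. 0)"
  unfolding trivial_mod_def by (rule exI[of _ "[]"]) (simp add: lincomb_Nil)

lemma triv_add: "trivial_mod S w p \<Longrightarrow> trivial_mod S w q \<Longrightarrow> trivial_mod S w (\<lambda>x. p x + q x)"
  unfolding trivial_mod_def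
  apply clarify
  subgoal for l1 l2 by (rule exI[of _ "l1 @ l2"]) (auto simp: lincomb_append)
  done

lemma triv_scale: "trivial_mod S w p \<Longrightarrow> trivial_mod S w (\<lambda>x. c * p x)"
proof -
  assume "trivial_mod S w p"
  then obtain l where l: "p = lincomb l" "\<forall>(\<alpha>, u, s, v) \<in> set l. s \<in> S \<and> deglex_less (u @ lead s @ v) w"
    unfolding trivial_mod_def by blast
  let ?l = "map (\<lambda>(\<alpha>, u, s, v). (c * \<alpha>, u, s, v)) l"
  have "(\<lambda>x. c * p x) = lincomb ?l" using l(1) lincomb_scale[of c l] by simp
  moreover have "\<forall>(\<alpha>, u, s, v) \<in> set ?l. s \<in> S \<and> deglex_less (u @ lead s @ v) w"
    using l(2) by fastforce
  ultimately show ?thesis unfolding trivial_mod_def by blast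
qed

lemma triv_diff: "trivial_mod S w p \<Longrightarrow> trivial_mod S w q \<Longrightarrow> trivial_mod S w (\<lambda>x. p x - q x)"
proof -
  assume "trivial_mod S w p" "trivial_mod S w q"
  then have "trivial_mod S w (\<lambda>x. p x + (\<lambda>x. (-1) * q x) x)" by (intro triv_add triv_scale)
  then show ?thesis by simp
qed

lemma triv_single: "s \<in> S \<Longrightarrow> deglex_less (u @ lead s @ v) w \<Longrightarrow> trivial_mod S w (wmul u s v)"
  unfolding trivial_mod_def
  by (rule exI[of _ "[(1, u, s, v)]"]) (simp add: lincomb_single)

fun X :: "nat \<Rightarrow> word" where
  "X 0 = []" | "X (Suc m) = A # C # X m"
fun Y :: "nat \<Rightarrow> word" where
  "Y 0 = []" | "Y (Suc m) = C # A # Y m"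

lemma X_concat: "concat (replicate m [A,C]) = X m" by (induction m) auto
lemma Y_concat: "concat (replicate m [C,A]) = Y m" by (induction m) auto
lemma len_X[simp]: "length (X m) = 2 * m" by (induction m) auto
lemma len_Y[simp]: "length (Y m) = 2 * m" by (induction m) auto
lemma X_Suc': "X (Suc m) = X m @ [A, C]" by (induction m) auto
lemma Y_Suc': "Y (Suc m) = Y m @ [C, A]" by (induction m) auto
lemma B_notin_X: "B \<notin> set (X m)" by (induction m) auto

definition rules :: "(word \<times> word) set" where
  "rules = {([A,A],[]), ([B,B],[]), ([C,C],[]), ([B,C,A],[A,C,B]), ([C,A,B],[B,A,C]), ([C,B,A],[A,B,C])}
     \<union> {(B # X m @ [B], Y m) | m. m \<ge> 1}"

lemma rules_less: "(l, r) \<in> rules \<Longrightarrow> deglex_less r l"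
  unfolding rules_def
  apply (elim UnE insertE)
  apply (simp_all add: deglex_less_def Cons_lenlex_iff)
  apply (auto simp: lenlex_conv)
  done

lemma R'_eq: "R'_G23 = (\<lambda>(l, r). binom l r) ` rules"
proof -
  have e: "{binom ([B] @ concat (replicate m [A,C]) @ [B]) (concat (replicate m [C,A])) | m::nat. m \<ge> 1} = (\<lambda>(l, r). binom l r) ` {(B # X m @ [B], Y m) | m. m \<ge> 1}"
    unfolding X_concat Y_concat by auto
  show ?thesis
    unfolding R'_G23_def R_G23_def rules_def image_Un e by simp
qed

definition step :: "word \<Rightarrow> word \<Rightarrow> bool" where
  "step x y \<longleftrightarrow> (\<exists>u v l r. (l, r) \<in> rules \<and> x = u @ l @ v \<and> y = u @ r @ v)"

lemma step_less: "step x y \<Longrightarrow> deglex_less y x"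
proof -
  assume "step x y"
  then obtain u v l r where "(l, r) \<in> rules" "x = u @ l @ v" "y = u @ r @ v" unfolding step_def by blast
  then show ?thesis using rules_less deglex_mono by simp
qed

lemma stepI: "(l, r) \<in> rules \<Longrightarrow> step (u @ l @ v) (u @ r @ v)"
  unfolding step_def by blast

lemma steps_less_eq: "step\<^sup>*\<^sup>* x y \<Longrightarrow> x = y \<or> deglex_less y x"
proof (induction rule: rtranclp_induct)
  case base
  then show ?case by simp
next
  case (step y z)
  then show ?case using step_less[OF step(2)] deglex_trans by blast
qed

lemma step_triv:
  assumes "step x y" "deglex_less x w"
  shows "trivial_mod (R'_G23 :: 'k::field ncpoly set) w (binom x y)"
proof -
  obtain u v l r where lr: "(l, r) \<in> rules" "x = u @ l @ v" "y = u @ r @ v"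
    using assms(1) unfolding step_def by blast
  have "binom l r \<in> (R'_G23 :: 'k ncpoly set)" unfolding R'_eq by (rule image_eqI[where x="(l,r)"]) (simp_all add: lr(1))
  moreover have "lead (binom l r :: 'k ncpoly) = l" using lead_binom rules_less lr(1) by blast
  ultimately have "trivial_mod (R'_G23 :: 'k::field ncpoly set) w (wmul u (binom l r) v)"
    using assms(2) lr(2) by (intro triv_single) auto
  then show ?thesis using lr by (simp add: wmul_binom)
qed

lemma binom_trans: "binom x z = (\<lambda>t. binom x y t + binom y z t)"
  by (rule ext) (simp add: binom_def)

lemma steps_triv:
  assumes "step\<^sup>*\<^sup>* x z" "deglex_less x w"
  shows "trivial_mod (R'_G23 :: 'k::field ncpoly set) w (binom x z)"
  using assms
proof (induction rule: converse_rtranclp_induct)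
  case base
  then show ?case by (simp add: binom_self triv_zero)
next
  case (step x y)
  have "deglex_less y w" using step_less[OF step(1)] step(4) deglex_trans by blast
  then have "trivial_mod (R'_G23 :: 'k::field ncpoly set) w (binom y z)" using step by blast
  moreover have "trivial_mod (R'_G23 :: 'k::field ncpoly set) w (binom x y)"
    using step_triv step by blast
  ultimately show ?case by (subst binom_trans[of x z y]) (rule triv_add)
qed

lemma join_triv:
  assumes "step\<^sup>*\<^sup>* x z" "step\<^sup>*\<^sup>* y z" "deglex_less x w" "deglex_less y w"
  shows "trivial_mod (R'_G23 :: 'k::field ncpoly set) w (binom x y)"
proof -
  have e: "(binom x y :: 'k ncpoly) = (\<lambda>t. binom x z t - binom y z t)" by (rule ext) (simp add: binom_def)
  show ?thesis unfolding e
    by (rule triv_diff) (rule steps_triv; use assms in blast)+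
qed

lemma steps_ctx: "step\<^sup>*\<^sup>* x y \<Longrightarrow> step\<^sup>*\<^sup>* (u @ x @ v) (u @ y @ v)"
proof (induction rule: rtranclp_induct)
  case base then show ?case by simp
next
  case (step y z)
  from step(2) obtain u' v' l r where "(l, r) \<in> rules" "y = u' @ l @ v'" "z = u' @ r @ v'"
    unfolding step_def by blast
  then have "step (u @ y @ v) (u @ z @ v)" unfolding step_def
    by (intro exI[of _ "u @ u'"] exI[of _ "v' @ v"] exI[of _ l] exI[of _ r]) simp
  then show ?case using step(3) by simp
qed

lemma steps_ctx1: "step\<^sup>*\<^sup>* x y \<Longrightarrow> step\<^sup>*\<^sup>* (u @ x) (u @ y)"
  using steps_ctx[of x y u "[]"] by simp
lemma steps_ctx2: "step\<^sup>*\<^sup>* x y \<Longrightarrow> step\<^sup>*\<^sup>* (x @ v) (y @ v)"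
  using steps_ctx[of x y "[]" v] by simp
lemma steps_Cons: "step\<^sup>*\<^sup>* x y \<Longrightarrow> step\<^sup>*\<^sup>* (c # x) (c # y)"
  using steps_ctx[of x y "[c]" "[]"] by simp

lemma rule_steps: "(l, r) \<in> rules \<Longrightarrow> step\<^sup>*\<^sup>* (u @ l @ v) (u @ r @ v)"
  using stepI by blast

lemma r_AA: "step\<^sup>*\<^sup>* (u @ [A,A] @ v) (u @ v)"
  using rule_steps[of "[A,A]" "[]" u v] by (simp add: rules_def)
lemma r_BB: "step\<^sup>*\<^sup>* (u @ [B,B] @ v) (u @ v)"
  using rule_steps[of "[B,B]" "[]" u v] by (simp add: rules_def)
lemma r_CC: "step\<^sup>*\<^sup>* (u @ [C,C] @ v) (u @ v)"
  using rule_steps[of "[C,C]" "[]" u v] by (simp add: rules_def)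
lemma r_BCA: "step\<^sup>*\<^sup>* (u @ [B,C,A] @ v) (u @ [A,C,B] @ v)"
  using rule_steps[of "[B,C,A]" "[A,C,B]" u v] by (simp add: rules_def)
lemma r_CAB: "step\<^sup>*\<^sup>* (u @ [C,A,B] @ v) (u @ [B,A,C] @ v)"
  using rule_steps[of "[C,A,B]" "[B,A,C]" u v] by (simp add: rules_def)
lemma r_CBA: "step\<^sup>*\<^sup>* (u @ [C,B,A] @ v) (u @ [A,B,C] @ v)"
  using rule_steps[of "[C,B,A]" "[A,B,C]" u v] by (simp add: rules_def)
lemma r_Bm: "step\<^sup>*\<^sup>* (u @ (B # X m @ [B]) @ v) (u @ Y m @ v)"
proof (cases m)
  case 0 then show ?thesis using r_BB[of u v] by simp
next
  case (Suc n)
  then have "(B # X m @ [B], Y m) \<in> {(B # X m @ [B], Y m) | m. m \<ge> 1}" by (intro CollectI exI[of _ m]) simp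
  then have "(B # X m @ [B], Y m) \<in> rules" unfolding rules_def by (rule UnI2)
  then show ?thesis by (rule rule_steps)
qed

lemma L_BY: "step\<^sup>*\<^sup>* (B # Y k) (X k @ [B])"
proof (induction k)
  case 0 then show ?case by simp
next
  case (Suc k)
  have "step\<^sup>*\<^sup>* (B # Y (Suc k)) (A # C # B # Y k)"
    using r_BCA[of "[]" "Y k"] by simp
  also have "step\<^sup>*\<^sup>* \<dots> (A # C # X k @ [B])"
    using steps_ctx1[OF Suc, of "[A,C]"] by simp
  finally show ?case by simp
qed

lemma L_YB: "step\<^sup>*\<^sup>* (Y m @ [B]) (B # X m)"
proof (induction m)
  case 0 then show ?case by simp
next
  case (Suc m)
  have "step\<^sup>*\<^sup>* (Y (Suc m) @ [B]) (C # A # B # X m)"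
    using steps_ctx1[OF Suc, of "[C,A]"] by simp
  also have "step\<^sup>*\<^sup>* \<dots> (B # A # C # X m)"
    using r_CAB[of "[]" "X m"] by simp
  finally show ?case by simp
qed

lemma L_XY: "step\<^sup>*\<^sup>* (X m @ Y k) (X (m - k) @ Y (k - m))"
proof (induction m arbitrary: k)
  case 0 then show ?case by simp
next
  case (Suc m)
  show ?case
  proof (cases k)
    case 0 then show ?thesis by simp
  next
    case (Suc k')
    have "step\<^sup>*\<^sup>* (X (Suc m) @ Y k) (X m @ [A] @ [A] @ Y k')"
      using r_CC[of "X m @ [A]" "[A] @ Y k'"] Suc by (simp del: X.simps(2) add: X_Suc')
    also have "step\<^sup>*\<^sup>* \<dots> (X m @ Y k')"
      using r_AA[of "X m" "Y k'"] by simp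
    also have "step\<^sup>*\<^sup>* \<dots> (X (m - k') @ Y (k' - m))" by (rule Suc.IH)
    finally show ?thesis using Suc by simp
  qed
qed

lemma L_YX: "step\<^sup>*\<^sup>* (Y m @ X k) (Y (m - k) @ X (k - m))"
proof (induction m arbitrary: k)
  case 0 then show ?case by simp
next
  case (Suc m)
  show ?case
  proof (cases k)
    case 0 then show ?thesis by simp
  next
    case (Suc k')
    have "step\<^sup>*\<^sup>* (Y (Suc m) @ X k) (Y m @ [C] @ [C] @ X k')"
      using r_AA[of "Y m @ [C]" "[C] @ X k'"] Suc by (simp del: Y.simps(2) add: Y_Suc')
    also have "step\<^sup>*\<^sup>* \<dots> (Y m @ X k')"
      using r_CC[of "Y m" "X k'"] by simp
    also have "step\<^sup>*\<^sup>* \<dots> (Y (m - k') @ X (k' - m))" by (rule Suc.IH)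
    finally show ?thesis using Suc by simp
  qed
qed

definition joinable :: "word \<Rightarrow> word \<Rightarrow> bool" where
  "joinable x y \<longleftrightarrow> (\<exists>z. step\<^sup>*\<^sup>* x z \<and> step\<^sup>*\<^sup>* y z)"

lemma joinI: "step\<^sup>*\<^sup>* x z \<Longrightarrow> step\<^sup>*\<^sup>* y z \<Longrightarrow> joinable x y"
  unfolding joinable_def by blast

fun red1 :: "word \<Rightarrow> word" where
  "red1 (A # A # w) = w"
| "red1 (B # B # w) = w"
| "red1 (C # C # w) = w"
| "red1 (B # C # A # w) = A # C # B # w"
| "red1 (C # A # B # w) = B # A # C # w"
| "red1 (C # B # A # w) = A # B # C # w"
| "red1 (B # A # C # B # w) = C # A # w"
| "red1 (x # w) = x # red1 w"
| "red1 [] = []"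

lemma red1_steps: "step\<^sup>*\<^sup>* w (red1 w)"
proof (induction w rule: red1.induct)
  case (7 w) then show ?case using r_Bm[of "[]" 1 w] by simp
qed (use r_AA[of "[]"] r_BB[of "[]"] r_CC[of "[]"] r_BCA[of "[]"] r_CAB[of "[]"] r_CBA[of "[]"] in
     \<open>simp_all add: steps_Cons\<close>)

definition nf6 :: "word \<Rightarrow> word" where
  "nf6 w = red1 (red1 (red1 (red1 (red1 (red1 w)))))"

lemma nf6_steps: "step\<^sup>*\<^sup>* w (nf6 w)"
  unfolding nf6_def by (meson red1_steps rtranclp_trans)

lemma join_nf6: "nf6 x = nf6 y \<Longrightarrow> joinable x y"
  by (metis joinI nf6_steps)

definition finrules :: "(word \<times> word) set" where
  "finrules = {([A,A],[]), ([B,B],[]), ([C,C],[]), ([B,C,A],[A,C,B]), ([C,A,B],[B,A,C]), ([C,B,A],[A,B,C])}"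

lemma split_word: "L = a' @ s \<Longrightarrow> s \<noteq> [] \<Longrightarrow> \<exists>i < length L. a' = take i L \<and> s = drop i L"
  by (intro exI[of _ "length a'"]) auto

lemma crit_ff:
  assumes "(L1, R1) \<in> finrules" "(L2, R2) \<in> finrules" "L1 = a' @ s" "L2 = s @ b'" "s \<noteq> []"
  shows "joinable (a' @ R2) (R1 @ b')"
proof -
  obtain i where i: "i < length L1" "a' = take i L1" "s = drop i L1" using split_word assms(3,5) by blast
  have l3: "length L1 \<le> 3" using assms(1) unfolding finrules_def by auto
  have "i = 0 \<or> i = 1 \<or> i = 2" using i(1) l3 by linarith
  then show ?thesis
    using assms(1,2) i(2,3) assms(4) unfolding finrules_def
    by (elim disjE insertE emptyE; auto intro!: join_nf6 simp: nf6_def)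
qed


lemma J1: "joinable (B # C # A # Y j) (A # C # X j @ [B])"
  using L_BY[of "Suc j"] by (intro joinI[of _ "A # C # X j @ [B]"]) auto

lemma J2: "joinable (C # C # A # Y j) (A # B # C # C # X j @ [B])"
proof (rule joinI[of _ "A # Y j"])
  show "step\<^sup>*\<^sup>* (C # C # A # Y j) (A # Y j)" using r_CC[of "[]" "A # Y j"] by simp
  have "step\<^sup>*\<^sup>* (A # B # C # C # X j @ [B]) (A # B # X j @ [B])" using r_CC[of "[A, B]" "X j @ [B]"] by simp
  also have "step\<^sup>*\<^sup>* \<dots> (A # Y j)" using r_Bm[of "[A]" j "[]"] by simp
  finally show "step\<^sup>*\<^sup>* (A # B # C # C # X j @ [B]) (A # Y j)" .
qed

lemma J6: "joinable (C # A # C # A # Y j) (B # A # C # A # C # X j @ [B])"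
proof (rule joinI[of _ "C # A # C # A # Y j"])
  show "step\<^sup>*\<^sup>* (B # A # C # A # C # X j @ [B]) (C # A # C # A # Y j)"
    using r_Bm[of "[]" "Suc (Suc j)" "[]"] by simp
qed simp

lemma crit_fB:
  assumes "(L1, R1) \<in> finrules" "L1 = a' @ s" "B # A # C # X j @ [B] = s @ b'" "s \<noteq> []"
  shows "joinable (a' @ Y (Suc j)) (R1 @ b')"
proof -
  obtain i where i: "i < length L1" "a' = take i L1" "s = drop i L1" using split_word assms(2,4) by blast
  have l3: "length L1 \<le> 3" using assms(1) unfolding finrules_def by auto
  have "i = 0 \<or> i = 1 \<or> i = 2" using i(1) l3 by linarith
  then show ?thesis
    using assms(1) i(2,3) assms(3,4) unfolding finrules_def
    by (elim disjE insertE emptyE) (auto simp: Cons_eq_append_conv J1 J2 J6)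
qed


lemma split_suffix:
  assumes "a' @ s = P @ Q" "length s \<le> length Q"
  shows "\<exists>t. a' = P @ t \<and> Q = t @ s"
proof -
  from assms(1) obtain us where "a' = P @ us \<and> us @ s = Q \<or> a' @ us = P \<and> s = us @ Q"
    unfolding append_eq_append_conv2 by blast
  then show ?thesis
  proof
    assume "a' = P @ us \<and> us @ s = Q" then show ?thesis by blast
  next
    assume h: "a' @ us = P \<and> s = us @ Q"
    then have "us = []" using assms(2) by simp
    then show ?thesis using h by simp
  qed
qed

lemma XSS: "X (Suc (Suc i)) = X i @ [A, C, A, C]"
  by (simp only: X_Suc' append_assoc) simp

lemma XAC: "A # C # X i = X i @ [A, C]" by (metis X.simps(2) X_Suc')
lemma YCA: "C # A # Y i = Y i @ [C, A]" by (metis Y.simps(2) Y_Suc')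
lemma YCA': "C # A # Y i @ w = Y i @ C # A # w" by (metis YCA append_Cons append_assoc append.left_neutral)

lemma K1: "joinable (B # X i @ [A, C]) (C # A # Y i @ [B])"
proof (rule joinI[of _ "B # X i @ [A, C]"])
  show "step\<^sup>*\<^sup>* (C # A # Y i @ [B]) (B # X i @ [A, C])"
    using L_YB[of "Suc i"] by (simp del: X.simps add: X_Suc')
qed simp

lemma K2: "joinable (B # X i @ [A, C, A, C, B]) (C # A # Y i @ [C, A])"
proof (rule joinI[of _ "C # A # Y i @ [C, A]"])
  show "step\<^sup>*\<^sup>* (B # X i @ [A, C, A, C, B]) (C # A # Y i @ [C, A])"
    using r_Bm[of "[]" "Suc (Suc i)" "[]"] by (simp del: X.simps Y.simps add: XSS Y_Suc' X_Suc' YCA')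
qed simp

lemma K3: "joinable (B # X i @ [A, A, B, C]) (C # A # Y i @ [A])"
proof (rule joinI[of _ "Y i @ [C]"])
  have "step\<^sup>*\<^sup>* (B # X i @ [A, A, B, C]) (B # X i @ [B, C])"
    using r_AA[of "B # X i" "[B, C]"] by simp
  also have "step\<^sup>*\<^sup>* \<dots> (Y i @ [C])" using r_Bm[of "[]" i "[C]"] by simp
  finally show "step\<^sup>*\<^sup>* (B # X i @ [A, A, B, C]) (Y i @ [C])" .
  show "step\<^sup>*\<^sup>* (C # A # Y i @ [A]) (Y i @ [C])"
    using r_AA[of "Y i @ [C]" "[]"] by (simp add: YCA')
qed

lemma crit_Bf:
  assumes "(L2, R2) \<in> finrules" "B # X (Suc i) @ [B] = a' @ s" "L2 = s @ b'" "s \<noteq> []"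
  shows "joinable (a' @ R2) (Y (Suc i) @ b')"
proof -
  have "length L2 \<le> 3" using assms(1) unfolding finrules_def by auto
  then have l3: "length s \<le> 3" using assms(3) by simp
  have "a' @ s = (B # X i) @ [A, C, B]" using assms(2) by (simp del: X.simps(2) add: X_Suc')
  then have "\<exists>t. a' = (B # X i) @ t \<and> [A, C, B] = t @ s" by (rule split_suffix) (use l3 in simp)
  then obtain t where t: "a' = (B # X i) @ t" "[A, C, B] = t @ s" by blast
  obtain k where k: "k < 3" "t = take k [A, C, B]" "s = drop k [A, C, B]"
    using split_word[OF t(2) assms(4)] by (metis length_Cons list.size(3) numeral_3_eq_3)
  have "k = 0 \<or> k = 1 \<or> k = 2" using k(1) by linarith
  then show ?thesis
    using assms(1,3) k(2,3) t(1) unfolding finrules_def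
    by (elim disjE insertE emptyE) (auto simp: Cons_eq_append_conv K1 K2 K3)
qed


lemma B_snoc_X: "X k @ [B] = X m @ B # b' \<Longrightarrow> b' = []"
proof (rule ccontr)
  assume h: "X k @ [B] = X m @ B # b'" "b' \<noteq> []"
  then obtain b'' x where "b' = b'' @ [x]" by (metis rev_exhaust)
  then have "X k = X m @ B # b''" using h(1) by simp
  then show False using B_notin_X[of k] by simp
qed

lemma join_XY: "joinable (B # X m @ Y k) (Y m @ X k @ [B])"
proof (cases "k \<le> m")
  case True
  have "step\<^sup>*\<^sup>* (B # X m @ Y k) (B # X (m - k))"
    using steps_Cons[OF L_XY[of m k], of B] True by simp
  moreover have "step\<^sup>*\<^sup>* (Y m @ X k @ [B]) (B # X (m - k))"
  proof -
    have "step\<^sup>*\<^sup>* (Y m @ X k @ [B]) (Y (m - k) @ [B])"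
      using steps_ctx2[OF L_YX[of m k], of "[B]"] True by simp
    also have "step\<^sup>*\<^sup>* \<dots> (B # X (m - k))" by (rule L_YB)
    finally show ?thesis .
  qed
  ultimately show ?thesis by (rule joinI)
next
  case False
  have "step\<^sup>*\<^sup>* (B # X m @ Y k) (X (k - m) @ [B])"
  proof -
    have "step\<^sup>*\<^sup>* (B # X m @ Y k) (B # Y (k - m))"
      using steps_Cons[OF L_XY[of m k], of B] False by simp
    also have "step\<^sup>*\<^sup>* \<dots> (X (k - m) @ [B])" by (rule L_BY)
    finally show ?thesis .
  qed
  moreover have "step\<^sup>*\<^sup>* (Y m @ X k @ [B]) (X (k - m) @ [B])"
    using steps_ctx2[OF L_YX[of m k], of "[B]"] False by simp
  ultimately show ?thesis by (rule joinI)
qed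

lemma crit_BB:
  assumes "B # X m @ [B] = a' @ s" "B # X k @ [B] = s @ b'" "s \<noteq> []"
  shows "joinable (a' @ Y k) (Y m @ b')"
proof (cases a')
  case Nil
  then have "B # X k @ [B] = B # X m @ [B] @ b'" using assms by simp
  then have e: "X k @ [B] = X m @ B # b'" by simp
  then have "b' = []" by (rule B_snoc_X)
  then have "X k = X m" using e by simp
  then have "length (X k) = length (X m)" by simp
  then have "k = m" by simp
  then show ?thesis using Nil \<open>b' = []\<close> by (simp add: joinable_def) blast
next
  case (Cons x a'')
  obtain s' where s: "s = B # s'" using assms(2,3) by (cases s) auto
  then have h: "X m @ [B] = a'' @ B # s'" using assms(1) Cons by simp
  have "s' = []"
  proof (rule ccontr)
    assume "s' \<noteq> []"
    then obtain s'' y where "s' = s'' @ [y]" by (metis rev_exhaust)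
    then have "X m = a'' @ B # s''" using h by simp
    then show False using B_notin_X[of m] by simp
  qed
  then have "a'' = X m" "x = B" "b' = X k @ [B]" using h assms s Cons by auto
  then show ?thesis using Cons join_XY by simp
qed

lemma rules_cases:
  "(l, r) \<in> rules \<Longrightarrow> (l, r) \<in> finrules \<or> (\<exists>m. m \<ge> 1 \<and> l = B # X m @ [B] \<and> r = Y m)"
  unfolding rules_def finrules_def by blast

lemma X_nth: "i < 2 * m \<Longrightarrow> X m ! i = (if even i then A else C)"
proof (induction m arbitrary: i)
  case 0 then show ?case by simp
next
  case (Suc m)
  show ?case
  proof (cases i)
    case 0 then show ?thesis by simp
  next
    case (Suc i')
    show ?thesis
    proof (cases i')
      case 0 then show ?thesis using Suc by simp
    next
      case (Suc i'')
      then have "i'' < 2 * m" using Suc.prems \<open>i = Suc i'\<close> by simp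
      then show ?thesis using Suc.IH[of i''] Suc \<open>i = Suc i'\<close> by simp
    qed
  qed
qed

lemma Bm_nth: "i < 2 * m + 2 \<Longrightarrow> (B # X m @ [B]) ! i =
   (if i = 0 \<or> i = 2 * m + 1 then B else if odd i then A else C)"
proof (cases i)
  case 0 then show ?thesis by simp
next
  case (Suc i')
  assume "i < 2 * m + 2"
  then show ?thesis using Suc X_nth[of i' m] by (auto simp: nth_append)
qed

lemma sub_nth:
  assumes "L = a' @ M @ b'" "j < length M"
  shows "L ! (length a' + j) = M ! j"
  using assms by (simp add: nth_append)

lemma incl_ff:
  assumes "(L1, R1) \<in> finrules" "(L2, R2) \<in> finrules" "L1 = a' @ L2 @ b'"
  shows "a' = [] \<and> b' = [] \<and> R1 = R2"
proof -
  have "a' = take (length a') L1" "L2 @ b' = drop (length a') L1" using assms(3) by auto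
  moreover have "length L1 \<le> 3" using assms(1) unfolding finrules_def by auto
  then have "length a' \<le> 3" using assms(3) by simp
  then have "length a' = 0 \<or> length a' = 1 \<or> length a' = 2 \<or> length a' = 3" by linarith
  ultimately show ?thesis using assms(1,2) unfolding finrules_def
    by (elim disjE insertE emptyE) (auto simp: Cons_eq_append_conv)
qed

lemma incl_Bf:
  assumes "(L2, R2) \<in> finrules" "B # X m @ [B] = a' @ L2 @ b'" "m \<ge> 1"
  shows False
proof -
  let ?p = "length a'"
  have len: "?p + length L2 \<le> 2 * m + 2" using arg_cong[OF assms(2), of length] by simp
  have h: "\<And>j. j < length L2 \<Longrightarrow> (if ?p + j = 0 \<or> ?p + j = 2 * m + 1 then B else if odd (?p + j) then A else C) = L2 ! j"
  proof -
    fix j assume j: "j < length L2"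
    then have "?p + j < 2 * m + 2" using len by simp
    then show "(if ?p + j = 0 \<or> ?p + j = 2 * m + 1 then B else if odd (?p + j) then A else C) = L2 ! j"
      using sub_nth[OF assms(2) j] Bm_nth by metis
  qed
  show False using assms(1) unfolding finrules_def
  proof (elim insertE emptyE)
    assume "(L2, R2) = ([A, A], [])"
    then show False using h[of 0] h[of 1] len by (auto split: if_splits)
  next
    assume "(L2, R2) = ([B, B], [])"
    then show False using h[of 0] h[of 1] len assms(3) by (auto split: if_splits)
  next
    assume "(L2, R2) = ([C, C], [])"
    then show False using h[of 0] h[of 1] len by (auto split: if_splits)
  next
    assume "(L2, R2) = ([B, C, A], [A, C, B])"
    then show False using h[of 0] h[of 1] len by (auto split: if_splits)
  next
    assume "(L2, R2) = ([C, A, B], [B, A, C])"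
    then show False using h[of 0] h[of 1] h[of 2] len by (auto split: if_splits) presburger
  next
    assume "(L2, R2) = ([C, B, A], [A, B, C])"
    then show False using h[of 0] h[of 1] len by (auto split: if_splits)
  qed
qed

lemma incl_BB:
  assumes "B # X m @ [B] = a' @ (B # X k @ [B]) @ b'"
  shows "a' = [] \<and> b' = [] \<and> k = m"
proof -
  let ?p = "length a'"
  have len: "?p + 2 * k + 2 + length b' = 2 * m + 2" using arg_cong[OF assms, of length] by simp
  have h: "\<And>j. j < 2 * k + 2 \<Longrightarrow> (if ?p + j = 0 \<or> ?p + j = 2 * m + 1 then B else if odd (?p + j) then A else C) = (B # X k @ [B]) ! j"
  proof -
    fix j assume j: "j < 2 * k + 2"
    then have "?p + j < 2 * m + 2" using len by simp
    then show "(if ?p + j = 0 \<or> ?p + j = 2 * m + 1 then B else if odd (?p + j) then A else C) = (B # X k @ [B]) ! j"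
      using sub_nth[OF assms, of j] j Bm_nth by simp
  qed
  have "(B # X k @ [B]) ! 0 = B" by simp
  moreover have "(B # X k @ [B]) ! (2 * k + 1) = B" by (simp add: nth_append)
  ultimately have "?p = 0 \<or> ?p = 2 * m + 1" "?p + 2 * k + 1 = 0 \<or> ?p + 2 * k + 1 = 2 * m + 1"
    using h[of 0] h[of "2 * k + 1"] by (auto split: if_splits)
  then have "?p = 0" "k = m" using len by auto
  then show ?thesis using len by simp
qed

lemma crit_all:
  assumes "(L1, R1) \<in> rules" "(L2, R2) \<in> rules" "L1 = a' @ s" "L2 = s @ b'" "s \<noteq> []"
  shows "joinable (a' @ R2) (R1 @ b')"
  using rules_cases[OF assms(1)] rules_cases[OF assms(2)]
proof (elim disjE exE conjE)
  assume "(L1, R1) \<in> finrules" "(L2, R2) \<in> finrules"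
  then show ?thesis using crit_ff assms(3-5) by blast
next
  fix k assume h: "(L1, R1) \<in> finrules" "1 \<le> k" "L2 = B # X k @ [B]" "R2 = Y k"
  then obtain j where j: "k = Suc j" by (cases k) auto
  have "B # A # C # X j @ [B] = s @ b'" using h(3) assms(4) j by simp
  then show ?thesis using crit_fB[OF h(1) assms(3) _ assms(5)] h(4) j by blast
next
  fix m assume h: "1 \<le> m" "L1 = B # X m @ [B]" "R1 = Y m" "(L2, R2) \<in> finrules"
  then obtain i where i: "m = Suc i" by (cases m) auto
  show ?thesis using crit_Bf[OF h(4) _ assms(4,5), of i a'] h(2,3) i assms(3) by blast
next
  fix m k assume h: "1 \<le> m" "L1 = B # X m @ [B]" "R1 = Y m" "1 \<le> k" "L2 = B # X k @ [B]" "R2 = Y k"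
  show ?thesis using crit_BB[of m a' s k b'] h assms(3-5) by simp
qed

lemma incl_all:
  assumes "(L1, R1) \<in> rules" "(L2, R2) \<in> rules" "L1 = a' @ L2 @ b'"
  shows "a' = [] \<and> b' = [] \<and> R1 = R2"
  using rules_cases[OF assms(1)] rules_cases[OF assms(2)]
proof (elim disjE exE conjE)
  assume "(L1, R1) \<in> finrules" "(L2, R2) \<in> finrules"
  then show ?thesis using incl_ff assms(3) by blast
next
  fix k assume h: "(L1, R1) \<in> finrules" "1 \<le> k" "L2 = B # X k @ [B]" "R2 = Y k"
  have "length L1 \<le> 3" using h(1) unfolding finrules_def by auto
  moreover have "length L1 \<ge> length L2" using assms(3) by simp
  ultimately show ?thesis using h(2,3) by simp
next
  fix m assume h: "1 \<le> m" "L1 = B # X m @ [B]" "R1 = Y m" "(L2, R2) \<in> finrules"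
  then show ?thesis using incl_Bf[OF h(4), of m a' b'] assms(3) by simp
next
  fix m k assume h: "1 \<le> m" "L1 = B # X m @ [B]" "R1 = Y m" "1 \<le> k" "L2 = B # X k @ [B]" "R2 = Y k"
  then show ?thesis using incl_BB[of m a' k b'] assms(3) by simp
qed

lemma R'_elem: "f \<in> (R'_G23 :: 'k::field ncpoly set) \<Longrightarrow> \<exists>l r. (l, r) \<in> rules \<and> f = binom l r \<and> lead f = l"
  unfolding R'_eq using lead_binom rules_less by fastforce

lemma GS: "GS_basis (R'_G23 :: 'k::field ncpoly set)"
  unfolding GS_basis_def
proof (intro conjI ballI allI impI)
  fix f :: "'k ncpoly" assume "f \<in> R'_G23"
  then show "monic f" using R'_elem monic_binom rules_less by metis
next
  fix f g :: "'k ncpoly" and a' b' w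
  assume fg: "f \<in> R'_G23" "g \<in> R'_G23"
    and h: "w = lead f @ b' \<and> w = a' @ lead g \<and> length (lead f) + length (lead g) > length w"
  obtain L1 R1 where f: "(L1, R1) \<in> rules" "f = binom L1 R1" "lead f = L1" using R'_elem fg(1) by blast
  obtain L2 R2 where g: "(L2, R2) \<in> rules" "g = binom L2 R2" "lead g = L2" using R'_elem fg(2) by blast
  have eq: "L1 @ b' = a' @ L2" and w: "w = L1 @ b'"
    using h f g by auto
  have "length (lead f) + length (lead g) > length w" using h by blast
  then have lw: "length L1 + length L2 > length w" using f(3) g(3) by simp
  obtain us where "L1 = a' @ us \<and> us @ b' = L2 \<or> L1 @ us = a' \<and> b' = us @ L2"
    using eq unfolding append_eq_append_conv2 by blast
  then have s0: "L1 = a' @ us \<and> L2 = us @ b' \<and> us \<noteq> []"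
  proof (elim disjE conjE)
    assume "L1 = a' @ us" "us @ b' = L2"
    moreover then have "us \<noteq> []" using lw w by auto
    ultimately show ?thesis by simp
  next
    assume "L1 @ us = a'" "b' = us @ L2"
    then have False using lw w by auto
    then show ?thesis ..
  qed
  then have s: "L1 = a' @ us" "L2 = us @ b'" "us \<noteq> []" by auto
  have comp: "(\<lambda>x. wmul [] f b' x - wmul a' g [] x) = binom (a' @ R2) (R1 @ b')"
    unfolding f(2) g(2) wmul_binom
    by (rule ext) (simp add: binom_def eq)
  have j: "joinable (a' @ R2) (R1 @ b')" using crit_all[OF f(1) g(1) s] .
  have l1: "deglex_less (a' @ R2) w"
    using deglex_mono[OF rules_less[OF g(1)], of a' "[]"] w eq by simp
  have l2: "deglex_less (R1 @ b') w"
    using deglex_mono[OF rules_less[OF f(1)], of "[]" b'] w by simp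
  show "trivial_mod R'_G23 w (\<lambda>x. wmul [] f b' x - wmul a' g [] x)"
    unfolding comp using j l1 l2 join_triv unfolding joinable_def by blast
next
  fix f g :: "'k ncpoly" and a' b' w
  assume fg: "f \<in> R'_G23" "g \<in> R'_G23"
    and h: "w = lead f \<and> w = a' @ lead g @ b'"
  obtain L1 R1 where f: "(L1, R1) \<in> rules" "f = binom L1 R1" "lead f = L1" using R'_elem fg(1) by blast
  obtain L2 R2 where g: "(L2, R2) \<in> rules" "g = binom L2 R2" "lead g = L2" using R'_elem fg(2) by blast
  have Lsub: "L1 = a' @ L2 @ b'" using h f(3) g(3) by metis
  then have "a' = [] \<and> b' = [] \<and> R1 = R2" using incl_all[OF f(1) g(1)] by blast
  moreover then have "L1 = L2" using Lsub by simp
  ultimately have "(\<lambda>x. f x - wmul a' g b' x) = (\<lambda>_. 0)" using f g by (simp add: wmul_Nil)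
  then show "trivial_mod R'_G23 w (\<lambda>x. f x - wmul a' g b' x)" using triv_zero by simp
qed

lemma lincomb_Cons: "lincomb ((\<alpha>, u, s, v) # l) = (\<lambda>w. \<alpha> * wmul u s v w + lincomb l w)"
  by (rule ext) (simp add: lincomb_def)

lemma wmul_wmul: "wmul u (wmul u' t v') v = wmul (u @ u') t (v' @ v)"
proof (rule ext)
  fix w
  show "wmul u (wmul u' t v') v w = wmul (u @ u') t (v' @ v) w"
  proof (cases "\<exists>x. w = u @ x @ v")
    case True
    then obtain x where x: "w = u @ x @ v" by blast
    show ?thesis
    proof (cases "\<exists>y. x = u' @ y @ v'")
      case True
      then obtain y where y: "x = u' @ y @ v'" by blast
      have e1: "wmul u (wmul u' t v') v w = t y" unfolding x y wmul_app ..
      have "w = (u @ u') @ y @ (v' @ v)" using x y by simp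
      then have e2: "wmul (u @ u') t (v' @ v) w = t y" by (simp only: wmul_app)
      show ?thesis using e1 e2 by simp
    next
      case False
      then have "\<forall>y. w \<noteq> (u @ u') @ y @ (v' @ v)" using x by auto
      then show ?thesis using x False by (simp add: wmul_other)
    qed
  next
    case False
    then have "\<forall>y. w \<noteq> (u @ u') @ y @ (v' @ v)" by (metis append_assoc)
    then show ?thesis using False by (simp add: wmul_other)
  qed
qed

lemma wmul_lin: "wmul u (\<lambda>w. (c::'k::comm_ring_1) * p w + q w) v = (\<lambda>w. c * wmul u p v w + wmul u q v w)"
  unfolding wmul_def by (rule ext) auto

lemma wmul_zero: "wmul u (\<lambda>_. 0) v = (\<lambda>_. 0)"
  unfolding wmul_def by (rule ext) auto

lemma idl_zero: "(\<lambda>_. 0) \<in> ideal_gen T"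
  unfolding ideal_gen_def by (rule CollectI, rule exI[of _ "[]"]) (simp add: lincomb_Nil)

lemma idl_add: "p \<in> ideal_gen T \<Longrightarrow> q \<in> ideal_gen T \<Longrightarrow> (\<lambda>x. p x + q x) \<in> ideal_gen T"
proof -
  assume "p \<in> ideal_gen T" "q \<in> ideal_gen T"
  then obtain l1 l2 where l: "p = lincomb l1" "\<forall>(\<alpha>, u, s, v) \<in> set l1. s \<in> T"
     "q = lincomb l2" "\<forall>(\<alpha>, u, s, v) \<in> set l2. s \<in> T"
    unfolding ideal_gen_def by blast
  have "(\<lambda>x. p x + q x) = lincomb (l1 @ l2)" using l by (simp add: lincomb_append)
  moreover have "\<forall>(\<alpha>, u, s, v) \<in> set (l1 @ l2). s \<in> T" using l by auto
  ultimately show ?thesis unfolding ideal_gen_def by blast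
qed

lemma idl_scale: "p \<in> ideal_gen T \<Longrightarrow> (\<lambda>x. c * p x) \<in> ideal_gen T"
proof -
  assume "p \<in> ideal_gen T"
  then obtain l where l: "p = lincomb l" "\<forall>(\<alpha>, u, s, v) \<in> set l. s \<in> T"
    unfolding ideal_gen_def by blast
  let ?l = "map (\<lambda>(\<alpha>, u, s, v). (c * \<alpha>, u, s, v)) l"
  have "(\<lambda>x. c * p x) = lincomb ?l" using l(1) lincomb_scale[of c l] by simp
  moreover have "\<forall>(\<alpha>, u, s, v) \<in> set ?l. s \<in> T" using l(2) by fastforce
  ultimately show ?thesis unfolding ideal_gen_def by blast
qed

lemma idl_wmul: "p \<in> ideal_gen T \<Longrightarrow> wmul u p v \<in> ideal_gen T"
proof -
  assume "p \<in> ideal_gen T"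
  then obtain l where l: "p = lincomb l" "\<forall>(\<alpha>, u, s, v) \<in> set l. s \<in> T"
    unfolding ideal_gen_def by blast
  have "wmul u (lincomb l) v \<in> ideal_gen T" using l(2)
  proof (induction l)
    case Nil then show ?case by (simp add: lincomb_Nil wmul_zero idl_zero)
  next
    case (Cons x l)
    obtain \<alpha> u' s v' where x: "x = (\<alpha>, u', s, v')" by (cases x) auto
    have sT: "s \<in> T" using Cons.prems x by auto
    have "wmul (u @ u') s (v' @ v) = lincomb [(1, u @ u', s, v' @ v)]" by (simp add: lincomb_single)
    moreover have "lincomb [(1, u @ u', s, v' @ v)] \<in> ideal_gen T"
      unfolding ideal_gen_def using sT by auto
    ultimately have m: "wmul (u @ u') s (v' @ v) \<in> ideal_gen T" by simp
    have IH: "wmul u (lincomb l) v \<in> ideal_gen T" using Cons by auto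
    show ?case unfolding x lincomb_Cons wmul_lin wmul_wmul
      by (rule idl_add[OF idl_scale[OF m] IH])
  qed
  then show ?thesis using l(1) by simp
qed

lemma idl_gen: "s \<in> T \<Longrightarrow> s \<in> ideal_gen T"
proof -
  assume "s \<in> T"
  moreover have "s = lincomb [(1, [], s, [])]" by (simp add: lincomb_single wmul_Nil)
  ultimately show ?thesis unfolding ideal_gen_def by auto
qed

lemma ideal_sub:
  assumes "\<forall>s \<in> S. s \<in> ideal_gen T"
  shows "ideal_gen S \<subseteq> ideal_gen T"
proof
  fix p assume "p \<in> ideal_gen S"
  then obtain l where l: "p = lincomb l" "\<forall>(\<alpha>, u, s, v) \<in> set l. s \<in> S"
    unfolding ideal_gen_def by blast
  have "lincomb l \<in> ideal_gen T" using l(2)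
  proof (induction l)
    case Nil then show ?case by (simp add: lincomb_Nil idl_zero)
  next
    case (Cons x l)
    obtain \<alpha> u s v where x: "x = (\<alpha>, u, s, v)" by (cases x) auto
    have "s \<in> ideal_gen T" using Cons.prems x assms by auto
    then have "wmul u s v \<in> ideal_gen T" by (rule idl_wmul)
    moreover have "lincomb l \<in> ideal_gen T" using Cons by auto
    ultimately show ?case unfolding x lincomb_Cons by (rule idl_add[OF idl_scale])
  qed
  then show "p \<in> ideal_gen T" using l(1) by simp
qed

lemma ideal_mono: "S \<subseteq> T \<Longrightarrow> ideal_gen S \<subseteq> ideal_gen T"
  unfolding ideal_gen_def by fastforce

lemma R_sub: "R_G23 \<subseteq> R'_G23" unfolding R'_G23_def by blast

lemma binom_ctx: "binom x y \<in> ideal_gen T \<Longrightarrow> binom (u @ x @ v) (u @ y @ v) \<in> ideal_gen (T :: 'k::field ncpoly set)"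
  using idl_wmul[of "binom x y" T u v] by (simp add: wmul_binom)

lemma Bm_ideal: "(binom (B # X m @ [B]) (Y m) :: 'k::field ncpoly) \<in> ideal_gen R_G23"
proof (induction m)
  case 0
  have "(binom [B, B] [] :: 'k ncpoly) \<in> R_G23" unfolding R_G23_def by simp
  then show ?case by (simp add: idl_gen)
next
  case (Suc m)
  have r: "(binom [C, A, B] [B, A, C] :: 'k ncpoly) \<in> R_G23" unfolding R_G23_def by simp
  have h1: "(binom ([C, A, B] @ X m @ [B]) ([B, A, C] @ X m @ [B]) :: 'k ncpoly) \<in> ideal_gen R_G23"
    using binom_ctx[OF idl_gen[OF r], of "[]" "X m @ [B]"] by simp
  have h1': "(binom ([B, A, C] @ X m @ [B]) ([C, A, B] @ X m @ [B]) :: 'k ncpoly) \<in> ideal_gen R_G23"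
  proof -
    have "(binom ([B, A, C] @ X m @ [B]) ([C, A, B] @ X m @ [B]) :: 'k ncpoly)
      = (\<lambda>x. (-1) * binom ([C, A, B] @ X m @ [B]) ([B, A, C] @ X m @ [B]) x)"
      by (rule ext) (simp add: binom_def)
    then show ?thesis using idl_scale[OF h1, of "-1"] by simp
  qed
  have h2: "(binom ([C, A] @ (B # X m @ [B]) @ []) ([C, A] @ Y m @ []) :: 'k ncpoly) \<in> ideal_gen R_G23"
    by (rule binom_ctx[OF Suc])
  have "(binom (B # X (Suc m) @ [B]) (Y (Suc m)) :: 'k ncpoly)
     = (\<lambda>x. binom ([B, A, C] @ X m @ [B]) ([C, A, B] @ X m @ [B]) x + binom ([C, A] @ (B # X m @ [B]) @ []) ([C, A] @ Y m @ []) x)"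
    by (rule ext) (simp add: binom_def)
  then show ?case using idl_add[OF h1' h2] by simp
qed

lemma ideal_eq: "ideal_gen (R_G23 :: 'k::field ncpoly set) = ideal_gen R'_G23"
proof
  show "ideal_gen (R_G23 :: 'k::field ncpoly set) \<subseteq> ideal_gen R'_G23" by (rule ideal_mono[OF R_sub])
  show "ideal_gen (R'_G23 :: 'k::field ncpoly set) \<subseteq> ideal_gen R_G23"
  proof (rule ideal_sub, rule ballI)
    fix s :: "'k ncpoly" assume "s \<in> R'_G23"
    then have "s \<in> R_G23 \<or> (\<exists>m. s = binom (B # X m @ [B]) (Y m))"
      unfolding R'_G23_def X_concat Y_concat by auto
    then show "s \<in> ideal_gen R_G23" using idl_gen Bm_ideal by blast
  qed
qed

theorem mainTheorem9:
  shows "ideal_gen (R_G23 :: 'k::field ncpoly set) = ideal_gen R'_G23 \<and>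
         GS_basis (R'_G23 :: 'k::field ncpoly set)"
  using ideal_eq GS by blast

end
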